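(* For every bracket pattern $w$, $A(A(w))=A(w)$. In particular $\langle\!\langle A(w)\rangle\!\rangle=\langle\!\langle w\rangle\!\rangle$.
   Context: $\mathbb N=\{1,2,\dots\}$, $\mathbb N_0=\mathbb N\cup\{0\}$. A bracket pattern is a non-empty finite subset $w\subseteq\mathbb N$; $\|w\|:=\max(w)$. For bracket patterns $w,w'$: superposition $w\cup w'$; for $j\in w$ the projection $\cap_j w:=\{i\in w\mid i\le j\}$; the dual $w^\dagger:=\{\|w\|-i\mid i\in\mathbb N_0,\ i<\|w\|,\ i\notin w\}$. A bracket pattern category is a set of bracket patterns closed under superposition, duals and projections; $\langle\!\langle w\rangle\!\rangle$ denotes the smallest bracket pattern category containing $w$. The completion of a bracket pattern $w$ is $A(w):=\{j-i\mid j\in w,\ i\in\mathbb N_0,\ i\notin w,\ i<j\}$ (itself a bracket pattern). *)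

theory Defs
  imports Main
begin

definition bracket_pattern :: "nat set \<Rightarrow> bool" where
  "bracket_pattern w \<longleftrightarrow> finite w \<and> w \<noteq> {} \<and> 0 \<notin> w"

definition bp_norm :: "nat set \<Rightarrow> nat" where
  "bp_norm w = Max w"

definition bp_proj :: "nat \<Rightarrow> nat set \<Rightarrow> nat set" where
  "bp_proj j w = {i \<in> w. i \<le> j}"

definition bp_dual :: "nat set \<Rightarrow> nat set" where
  "bp_dual w = {bp_norm w - i | i. i < bp_norm w \<and> i \<notin> w}"

definition bp_category :: "nat set set \<Rightarrow> bool" where
  "bp_category C \<longleftrightarrow>
     (\<forall>w\<in>C. bracket_pattern w) \<and>
     (\<forall>w\<in>C. \<forall>w'\<in>C. w \<union> w' \<in> C) \<and>
     (\<forall>w\<in>C. bp_dual w \<in> C) \<and>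
     (\<forall>w\<in>C. \<forall>j\<in>w. bp_proj j w \<in> C)"

definition bp_generated :: "nat set \<Rightarrow> nat set set" where
  "bp_generated w = \<Inter> {C. bp_category C \<and> w \<in> C}"

definition bp_completion :: "nat set \<Rightarrow> nat set" where
  "bp_completion w = {j - i | j i. j \<in> w \<and> i \<notin> w \<and> i < j}"

end

theory Submission
  imports Defs
begin

lemma bp_basic:
  assumes "bracket_pattern u"
  shows "bp_norm u \<in> u" "\<And>x. x \<in> u \<Longrightarrow> 0 < x \<and> x \<le> bp_norm u" "0 < bp_norm u"
proof -
  have f: "finite u" "u \<noteq> {}" "0 \<notin> u" using assms unfolding bracket_pattern_def by auto
  show m: "bp_norm u \<in> u" unfolding bp_norm_def using f by simp
  show "\<And>x. x \<in> u \<Longrightarrow> 0 < x \<and> x \<le> bp_norm u" unfolding bp_norm_def using f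
    by (metis Max_ge gr0I)
  show "0 < bp_norm u" using m f by (metis gr0I)
qed

lemma bp_dual_iff:
  assumes "bracket_pattern u"
  shows "x \<in> bp_dual u \<longleftrightarrow> (0 < x \<and> x \<le> bp_norm u \<and> bp_norm u - x \<notin> u)"
proof
  assume "x \<in> bp_dual u"
  then obtain i where "x = bp_norm u - i" "i < bp_norm u" "i \<notin> u"
    unfolding bp_dual_def by auto
  moreover have "bp_norm u - x = i" using \<open>x = bp_norm u - i\<close> \<open>i < bp_norm u\<close> by simp
  ultimately show "0 < x \<and> x \<le> bp_norm u \<and> bp_norm u - x \<notin> u" by simp
next
  assume h: "0 < x \<and> x \<le> bp_norm u \<and> bp_norm u - x \<notin> u"
  then have "x = bp_norm u - (bp_norm u - x)" "bp_norm u - x < bp_norm u" by simp_all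
  then show "x \<in> bp_dual u" unfolding bp_dual_def mem_Collect_eq
    using h by (intro exI[of _ "bp_norm u - x"]) simp
qed

lemma bp_dual_bp:
  assumes "bracket_pattern u"
  shows "bracket_pattern (bp_dual u)" "bp_norm (bp_dual u) = bp_norm u"
proof -
  have fin: "bp_dual u \<subseteq> {1..bp_norm u}"
  proof
    fix x assume "x \<in> bp_dual u"
    then show "x \<in> {1..bp_norm u}" unfolding bp_dual_iff[OF assms] by simp
  qed
  have z: "0 \<notin> u" using assms unfolding bracket_pattern_def by auto
  have m: "bp_norm u \<in> bp_dual u" using bp_dual_iff[OF assms] bp_basic(3)[OF assms] z by simp
  show "bracket_pattern (bp_dual u)" unfolding bracket_pattern_def
    using fin m finite_subset by auto
  have "\<And>y. y \<in> bp_dual u \<Longrightarrow> y \<le> bp_norm u" using fin by auto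
  then show "bp_norm (bp_dual u) = bp_norm u" unfolding bp_norm_def[of "bp_dual u"]
    using m finite_subset[OF fin] by (intro Max_eqI) auto
qed

lemma bp_proj_bp:
  assumes "bracket_pattern u" "j \<in> u"
  shows "bracket_pattern (bp_proj j u)" "bp_norm (bp_proj j u) = j"
proof -
  have f: "finite u" "0 \<notin> u" using assms(1) unfolding bracket_pattern_def by auto
  have s: "bp_proj j u \<subseteq> u" unfolding bp_proj_def by blast
  have jin: "j \<in> bp_proj j u" unfolding bp_proj_def using assms(2) by simp
  have fin: "finite (bp_proj j u)" using finite_subset[OF s f(1)] .
  show "bracket_pattern (bp_proj j u)" unfolding bracket_pattern_def
    using fin jin s f(2) by blast
  have "\<And>y. y \<in> bp_proj j u \<Longrightarrow> y \<le> j" unfolding bp_proj_def by simp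
  then show "bp_norm (bp_proj j u) = j" unfolding bp_norm_def
    using Max_eqI[OF fin] jin by blast
qed

lemma compl_iff:
  assumes "bracket_pattern w"
  shows "x \<in> bp_completion w \<longleftrightarrow> (\<exists>i. i \<notin> w \<and> 0 < x \<and> i + x \<in> w)"
proof
  assume "x \<in> bp_completion w"
  then obtain j i where "x = j - i" "j \<in> w" "i \<notin> w" "i < j" unfolding bp_completion_def by auto
  then show "\<exists>i. i \<notin> w \<and> 0 < x \<and> i + x \<in> w" by (intro exI[of _ i]) simp
next
  assume "\<exists>i. i \<notin> w \<and> 0 < x \<and> i + x \<in> w"
  then obtain i where h: "i \<notin> w" "0 < x" "i + x \<in> w" by auto
  then have "x = (i + x) - i" "i < i + x" by auto
  then show "x \<in> bp_completion w" unfolding bp_completion_def mem_Collect_eq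
    using h by (intro exI[of _ "i + x"] exI[of _ i]) simp
qed

lemma compl_bp:
  assumes "bracket_pattern w"
  shows "bracket_pattern (bp_completion w)" "w \<subseteq> bp_completion w"
    "bp_completion w \<subseteq> {1..bp_norm w}"
proof -
  have z: "0 \<notin> w" using assms bracket_pattern_def by auto
  show sub: "w \<subseteq> bp_completion w"
  proof
    fix x assume "x \<in> w" then show "x \<in> bp_completion w"
      using compl_iff[OF assms] z by (metis add_0 gr0I)
  qed
  show b: "bp_completion w \<subseteq> {1..bp_norm w}"
  proof
    fix x assume "x \<in> bp_completion w"
    then obtain i where "i \<notin> w" "0 < x" "i + x \<in> w" using compl_iff[OF assms] by auto
    then show "x \<in> {1..bp_norm w}" using bp_basic(2)[OF assms, of "i+x"] by auto
  qed
  have "finite (bp_completion w)" using b finite_subset by blast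
  moreover have "bp_completion w \<noteq> {}" "0 \<notin> bp_completion w" using sub b assms
    unfolding bracket_pattern_def by auto
  ultimately show "bracket_pattern (bp_completion w)" unfolding bracket_pattern_def by blast
qed

lemma part1:
  assumes "bracket_pattern w"
  shows "bp_completion (bp_completion w) = bp_completion w"
proof
  have B: "bracket_pattern (bp_completion w)" using compl_bp[OF assms] by auto
  show "bp_completion w \<subseteq> bp_completion (bp_completion w)" using compl_bp(2)[OF B] .
  show "bp_completion (bp_completion w) \<subseteq> bp_completion w"
  proof
    fix x assume "x \<in> bp_completion (bp_completion w)"
    then obtain b where b: "b \<notin> bp_completion w" "0 < x" "b + x \<in> bp_completion w"
      using compl_iff[OF B] by auto
    then obtain i where i: "i \<notin> w" "i + (b + x) \<in> w" using compl_iff[OF assms] by auto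
    show "x \<in> bp_completion w"
    proof (cases "b = 0")
      case True then show ?thesis using b by simp
    next
      case False
      then have "i + b \<notin> w" using b(1) i(1) compl_iff[OF assms] by blast
      then show ?thesis using compl_iff[OF assms] i b(2) by (metis add.assoc)
    qed
  qed
qed

lemma cat_props:
  assumes "bp_category C"
  shows "\<And>u. u \<in> C \<Longrightarrow> bracket_pattern u"
    "\<And>u v. u \<in> C \<Longrightarrow> v \<in> C \<Longrightarrow> u \<union> v \<in> C"
    "\<And>u. u \<in> C \<Longrightarrow> bp_dual u \<in> C"
    "\<And>u j. u \<in> C \<Longrightarrow> j \<in> u \<Longrightarrow> bp_proj j u \<in> C"
  using assms unfolding bp_category_def by blast+

lemma cat_Union:
  assumes "bp_category C" "finite F" "F \<noteq> {}" "F \<subseteq> C"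
  shows "\<Union>F \<in> C"
  using assms(2,3,4)
proof (induction F rule: finite_ne_induct)
  case (singleton x) then show ?case by simp
next
  case (insert x F) then show ?case using cat_props(2)[OF assms(1)] by simp
qed

lemma shift_eq:
  assumes bp: "bracket_pattern w" and i: "i \<notin> w" "i < bp_norm w"
  shows "bp_dual (bp_proj (bp_norm w - i) (bp_dual w)) = {y. 0 < y \<and> i + y \<in> w}"
proof -
  define n where "n = bp_norm w"
  define D where "D = bp_dual w"
  have Dbp: "bracket_pattern D" and Dn: "bp_norm D = n" using bp_dual_bp[OF bp] D_def n_def by auto
  have Diff: "\<And>x. x \<in> D \<longleftrightarrow> (0 < x \<and> x \<le> n \<and> n - x \<notin> w)"
    unfolding D_def n_def using bp_dual_iff[OF bp] .
  have ni: "n - i \<in> D" unfolding Diff using i n_def by simp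
  define P where "P = bp_proj (n - i) D"
  have Pbp: "bracket_pattern P" and Pn: "bp_norm P = n - i"
    using bp_proj_bp[OF Dbp ni] P_def by auto
  have Piff: "\<And>x. x \<in> P \<longleftrightarrow> (x \<in> D \<and> x \<le> n - i)" unfolding P_def bp_proj_def by simp
  have nw: "n \<in> w" using bp_basic(1)[OF bp] n_def by simp
  have le: "\<And>y. y \<in> w \<Longrightarrow> y \<le> n" using bp_basic(2)[OF bp] n_def by simp
  show ?thesis
  proof (rule set_eqI)
    fix y
    have "y \<in> bp_dual P \<longleftrightarrow> (0 < y \<and> y \<le> n - i \<and> (n - i) - y \<notin> P)"
      using bp_dual_iff[OF Pbp] Pn by simp
    also have "\<dots> \<longleftrightarrow> (0 < y \<and> i + y \<in> w)"
    proof
      assume h: "0 < y \<and> y \<le> n - i \<and> (n - i) - y \<notin> P"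
      show "0 < y \<and> i + y \<in> w"
      proof (cases "y = n - i")
        case True
        then have "i + y = n" using i(2) unfolding n_def by linarith
        then show ?thesis using h nw by simp
      next
        case False
        then have "0 < (n - i) - y" "(n - i) - y \<le> n" using h by auto
        moreover have eq: "n - ((n - i) - y) = i + y" using h i(2) unfolding n_def by linarith
        moreover have "(n - i) - y \<notin> D"
        proof
          assume "(n - i) - y \<in> D"
          then have "(n - i) - y \<in> P" using Piff[of "(n - i) - y"] by simp
          then show False using h by blast
        qed
        ultimately have "n - ((n - i) - y) \<in> w" using Diff by blast
        then show ?thesis using eq h by simp
      qed
    next
      assume h: "0 < y \<and> i + y \<in> w"
      then have "i + y \<le> n" using le by blast
      then have yl: "y \<le> n - i" by linarith
      have eq: "n - ((n - i) - y) = i + y" using yl i(2) unfolding n_def by linarith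
      have "(n - i) - y \<notin> P"
      proof
        assume "(n - i) - y \<in> P"
        then have "(n - i) - y \<in> D" using Piff by blast
        then have "n - ((n - i) - y) \<notin> w" using Diff by blast
        then show False using eq h by simp
      qed
      then show "0 < y \<and> y \<le> n - i \<and> (n - i) - y \<notin> P" using h yl by blast
    qed
    finally show "y \<in> bp_dual (bp_proj (bp_norm w - i) (bp_dual w)) \<longleftrightarrow> y \<in> {y. 0 < y \<and> i + y \<in> w}"
      using P_def D_def n_def by simp
  qed
qed

lemma compl_in_cat:
  assumes C: "bp_category C" and w: "w \<in> C"
  shows "bp_completion w \<in> C"
proof -
  have bp: "bracket_pattern w" using cat_props(1)[OF C w] .
  define n where "n = bp_norm w"
  define I where "I = {i. i < n \<and> i \<notin> w}"
  have eq: "bp_completion w = \<Union>((\<lambda>i. {y. 0 < y \<and> i + y \<in> w}) ` I)"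
  proof (rule set_eqI)
    fix x
    show "x \<in> bp_completion w \<longleftrightarrow> x \<in> \<Union>((\<lambda>i. {y. 0 < y \<and> i + y \<in> w}) ` I)"
    proof
      assume "x \<in> bp_completion w"
      then obtain i where h: "i \<notin> w" "0 < x" "i + x \<in> w" using compl_iff[OF bp] by auto
      then have "i + x \<le> n" using bp_basic(2)[OF bp] n_def by simp
      then have "i \<in> I" using h I_def by simp
      then show "x \<in> \<Union>((\<lambda>i. {y. 0 < y \<and> i + y \<in> w}) ` I)" using h by blast
    next
      assume "x \<in> \<Union>((\<lambda>i. {y. 0 < y \<and> i + y \<in> w}) ` I)"
      then obtain i where "i \<in> I" "0 < x" "i + x \<in> w" by blast
      then show "x \<in> bp_completion w" using compl_iff[OF bp] I_def by blast
    qed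
  qed
  have fin: "finite I" unfolding I_def by simp
  have z: "0 \<in> I" unfolding I_def n_def using bp bp_basic(3)[OF bp] bracket_pattern_def by auto
  have sub: "(\<lambda>i. {y. 0 < y \<and> i + y \<in> w}) ` I \<subseteq> C"
  proof
    fix S assume "S \<in> (\<lambda>i. {y. 0 < y \<and> i + y \<in> w}) ` I"
    then obtain i where i: "i \<in> I" "S = {y. 0 < y \<and> i + y \<in> w}" by blast
    have "n - i \<in> bp_dual w" using bp_dual_iff[OF bp] i I_def n_def by simp
    then have "bp_dual (bp_proj (bp_norm w - i) (bp_dual w)) \<in> C"
      using cat_props[OF C] w n_def by simp
    then show "S \<in> C" using shift_eq[OF bp] i I_def n_def by simp
  qed
  show ?thesis unfolding eq using cat_Union[OF C] fin z sub by blast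
qed

lemma gen_lemma:
  assumes C: "bp_category C" and X: "X \<in> C"
  shows "bracket_pattern v \<Longrightarrow> bp_completion v \<subseteq> X \<Longrightarrow> v \<in> C"
proof (induction "bp_norm v" arbitrary: v rule: less_induct)
  case less
  note bp = less.prems(1) and AX = less.prems(2)
  define m where "m = bp_norm v"
  have mv: "m \<in> v" using bp_basic(1)[OF bp] m_def by simp
  have vle: "\<And>z. z \<in> v \<Longrightarrow> 0 < z \<and> z \<le> m" using bp_basic(2)[OF bp] m_def by simp
  have mX: "m \<in> X" using mv compl_bp(2)[OF bp] AX by blast
  define X' where "X' = bp_proj m X"
  have Xbp: "bracket_pattern X" using cat_props(1)[OF C X] .
  have X'C: "X' \<in> C" using cat_props(4)[OF C X mX] X'_def by simp
  have X'bp: "bracket_pattern X'" and X'n: "bp_norm X' = m" using bp_proj_bp[OF Xbp mX] X'_def by auto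
  have X'iff: "\<And>x. x \<in> X' \<longleftrightarrow> x \<in> X \<and> x \<le> m" unfolding X'_def bp_proj_def by simp
  have dsub: "bp_dual v \<subseteq> X'"
  proof
    fix x assume "x \<in> bp_dual v"
    then have h: "0 < x" "x \<le> m" "m - x \<notin> v" using bp_dual_iff[OF bp] m_def by auto
    then have "(m - x) + x \<in> v" using mv by simp
    then have "x \<in> bp_completion v" using compl_iff[OF bp] h by blast
    then show "x \<in> X'" using AX h X'iff by blast
  qed
  define E where "E = bp_dual X'"
  have EC: "E \<in> C" using cat_props(3)[OF C X'C] E_def by simp
  have Eiff: "\<And>y. y \<in> E \<longleftrightarrow> (0 < y \<and> y \<le> m \<and> m - y \<notin> X')"
    using bp_dual_iff[OF X'bp] X'n E_def by simp
  have Esub: "E \<subseteq> v"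
  proof
    fix y assume yE: "y \<in> E"
    show "y \<in> v"
    proof (rule ccontr)
      assume yv: "y \<notin> v"
      then have "y \<noteq> m" using mv by auto
      then have "y < m" "0 < y" using yE Eiff by auto
      then have "m - y \<in> bp_dual v" using bp_dual_iff[OF bp] m_def yv by simp
      then show False using dsub yE Eiff by blast
    qed
  qed
  have mE: "m \<in> E" using Eiff X'bp bracket_pattern_def bp_basic(3)[OF bp] m_def by simp
  show ?case
  proof (cases "v - {m} = {}")
    case True
    then have "v = E" using Esub mE by blast
    then show ?thesis using EC by simp
  next
    case False
    define k where "k = Max (v - {m})"
    have finv: "finite (v - {m})" using bp bracket_pattern_def by simp
    have kv: "k \<in> v - {m}" using Max_in[OF finv False] k_def by simp
    have kle: "\<And>z. z \<in> v - {m} \<Longrightarrow> z \<le> k" using Max_ge[OF finv] k_def by simp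
    have km: "k < m" using kv vle by fastforce
    define V where "V = bp_proj k v"
    have Vbp: "bracket_pattern V" and Vn: "bp_norm V = k" using bp_proj_bp[OF bp] kv V_def by auto
    have Viff: "\<And>x. x \<in> V \<longleftrightarrow> x \<in> v \<and> x \<le> k" unfolding V_def bp_proj_def by simp
    have "bp_completion V \<subseteq> X"
    proof
      fix x assume "x \<in> bp_completion V"
      then obtain i where h: "i \<notin> V" "0 < x" "i + x \<in> V" using compl_iff[OF Vbp] by blast
      then have "i \<notin> v" using Viff by auto
      then have "x \<in> bp_completion v" using compl_iff[OF bp] h Viff by blast
      then show "x \<in> X" using AX by blast
    qed
    then have VC: "V \<in> C" using less.hyps[of V] Vn km m_def Vbp by simp
    have "v = E \<union> V"
    proof
      show "v \<subseteq> E \<union> V"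
      proof
        fix z assume "z \<in> v"
        then show "z \<in> E \<union> V" using mE kle Viff by (cases "z = m") auto
      qed
      show "E \<union> V \<subseteq> v" using Esub Viff by blast
    qed
    then show ?thesis using cat_props(2)[OF C EC VC] by simp
  qed
qed

theorem lemma7p12:
  assumes "bracket_pattern w"
  shows "bp_completion (bp_completion w) = bp_completion w
         \<and> bp_generated (bp_completion w) = bp_generated w"
proof
  show "bp_completion (bp_completion w) = bp_completion w" using part1[OF assms] .
  have "\<And>C. bp_category C \<Longrightarrow> (bp_completion w \<in> C \<longleftrightarrow> w \<in> C)"
  proof
    fix C assume C: "bp_category C"
    show "bp_completion w \<in> C \<Longrightarrow> w \<in> C" using gen_lemma[OF C _ assms] by blast
    show "w \<in> C \<Longrightarrow> bp_completion w \<in> C" using compl_in_cat[OF C] by blast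
  qed
  then have "{C. bp_category C \<and> bp_completion w \<in> C} = {C. bp_category C \<and> w \<in> C}" by blast
  then show "bp_generated (bp_completion w) = bp_generated w" unfolding bp_generated_def by simp
qed

end
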